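(* For a monopoly SP, the optimal revenue-maximizing and social welfare-maximizing bandwidth allocation strategies are the same and are determined by the following cases: 1. If $B_S^0\le \frac{N_f\lambda_S^{1/\alpha-1}B}{N_f\lambda_S^{1/\alpha-1}+N_m}$, the optimal bandwidth allocation remains the same as that without the regulatory constraint, namely $B_S^{\text{SW}}=B_S^{\text{rev}}=\frac{N_f\lambda_S^{1/\alpha-1}B}{N_f\lambda_S^{1/\alpha-1}+N_m}$ and $B_M^{\text{SW}}=B_M^{\text{rev}}=\frac{N_m B}{N_f\lambda_S^{1/\alpha-1}+N_m}$. 2. If $B_S^0> \frac{N_f\lambda_S^{1/\alpha-1}B}{N_f\lambda_S^{1/\alpha-1}+N_m}$, the optimal bandwidth allocation is $B_S^{\text{SW}}=B_S^{\text{rev}}=B_S^0$, $B_M^{\text{SW}}=B_M^{\text{rev}}=B-B_S^0$, and consequently there is both a welfare and a revenue loss (relative to the unconstrained case). In both cases the optimal macro- and small-cell service prices are market-clearing prices, i.e., prices that equalize total rate demand and total rate supply in both cells.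
   Context: A single service provider (SP) has total licensed bandwidth $B$, which it splits into macro-cell bandwidth $B_M$ and small-cell bandwidth $B_S$ subject to $B_M+B_S\le B$, $B_M\ge 0$, and the regulatory constraint $B_S\ge B_S^0$ (a required minimum small-cell bandwidth). Macro-cells provide total rate $C_M=B_M R_0$ and small-cells provide total rate $C_S=\lambda_S B_S R_0$, where $R_0$ is the macro-cell spectral efficiency and $\lambda_S>1$. There are mobile users of density $N_m$, who can only associate with macro-cells (and have priority there), and fixed users of density $N_f$, who can associate with either macro- or small-cells (but not both). Every user has utility $u(r)=r^{1-\alpha}/(1-\alpha)$ with $\alpha\in(0,1)$, and given a price $p$ per unit rate chooses rate $D(p)=(1/p)^{1/\alpha}$. The SP charges prices $p_M,p_S\in(0,\infty)$ per unit rate for macro- and small-cell service; users pick the cheapest service and fill its capacity (splitting proportionally to capacities under ties, with leftover demand spilling over). With $K_M,K_S$ the masses of users associated with macro- and small-cells, the SP's revenue is $p_M K_M D(p_M)+p_S K_S D(p_S)$ and social welfare is $K_M u(D(p_M))+K_S u(D(p_S))$. The SP first chooses the bandwidth split, then prices. $B_S^{\text{SW}},B_M^{\text{SW}}$ denote the welfare-maximizing allocation and $B_S^{\text{rev}},B_M^{\text{rev}}$ the revenue-maximizing allocation. *)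

theory Defs
  imports Complex_Main
begin

text \<open>Model of a monopoly service provider with macro- and small-cells.
  Parameters: al (alpha), R0 (macro spectral efficiency), lS (lambda_S),
  Nm (mobile user density), Nf (fixed user density).\<close>

definition demand :: "real \<Rightarrow> real \<Rightarrow> real" where
  "demand al p = (1 / p) powr (1 / al)"

definition util :: "real \<Rightarrow> real \<Rightarrow> real" where
  "util al r = r powr (1 - al) / (1 - al)"

text \<open>User association: returns (K_M, K_S), the masses of users associated with
  macro- and small-cells, given bandwidths (BM, BS) and prices (pM, pS).
  Capacities are measured in users: capacity rate divided by per-user demand.
  Mobile users are served first in macro-cells (priority); fixed users choose the
  cheaper service, fill it, and the leftover spills over; under a tie the fixed
  users are split proportionally to the capacities, with spill-over of excess.\<close>

definition assoc :: "real \<Rightarrow> real \<Rightarrow> real \<Rightarrow> real \<Rightarrow> real \<Rightarrow>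
    real \<times> real \<Rightarrow> real \<times> real \<Rightarrow> real \<times> real" where
  "assoc al R0 lS Nm Nf s p =
    (let BM = fst s; BS = snd s; pM = fst p; pS = snd p;
         CM = BM * R0; CS = lS * BS * R0;
         cM = CM / demand al pM; cS = CS / demand al pS;
         mM = min Nm cM; R = cM - mM;
         (fM, fS) =
           (if pS < pM then
              (let fS = min Nf cS in (min (Nf - fS) R, fS))
            else if pM < pS then
              (let fM = min Nf R in (fM, min (Nf - fM) cS))
            else
              (let xS = (if CS + CM = 0 then 0 else Nf * CS / (CS + CM));
                   xM = Nf - xS
               in (min R (xM + max 0 (xS - cS)), min cS (xS + max 0 (xM - R)))))
     in (mM + fM, fS))"

definition revenue :: "real \<Rightarrow> real \<Rightarrow> real \<Rightarrow> real \<Rightarrow> real \<Rightarrow>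
    real \<times> real \<Rightarrow> real \<times> real \<Rightarrow> real" where
  "revenue al R0 lS Nm Nf s p =
    (let K = assoc al R0 lS Nm Nf s p in
       fst p * fst K * demand al (fst p) + snd p * snd K * demand al (snd p))"

definition welfare :: "real \<Rightarrow> real \<Rightarrow> real \<Rightarrow> real \<Rightarrow> real \<Rightarrow>
    real \<times> real \<Rightarrow> real \<times> real \<Rightarrow> real" where
  "welfare al R0 lS Nm Nf s p =
    (let K = assoc al R0 lS Nm Nf s p in
       fst K * util al (demand al (fst p)) + snd K * util al (demand al (snd p)))"

definition feasible :: "real \<Rightarrow> real \<Rightarrow> (real \<times> real) set" where
  "feasible B BS0 = {(BM, BS). BM + BS \<le> B \<and> BM \<ge> 0 \<and> BS \<ge> BS0}"

definition pos_prices :: "(real \<times> real) set" where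
  "pos_prices = {(pM, pS). pM > 0 \<and> pS > 0}"

definition opt_prices :: "(real \<times> real \<Rightarrow> real \<times> real \<Rightarrow> real) \<Rightarrow>
    real \<times> real \<Rightarrow> real \<times> real \<Rightarrow> bool" where
  "opt_prices F s p \<longleftrightarrow> p \<in> pos_prices \<and> (\<forall>q \<in> pos_prices. F s q \<le> F s p)"

definition opt_alloc :: "(real \<times> real \<Rightarrow> real \<times> real \<Rightarrow> real) \<Rightarrow>
    real \<Rightarrow> real \<Rightarrow> real \<times> real \<Rightarrow> bool" where
  "opt_alloc F B BS0 s \<longleftrightarrow> s \<in> feasible B BS0 \<and>
     (\<exists>p \<in> pos_prices. \<forall>s' \<in> feasible B BS0. \<forall>q \<in> pos_prices. F s' q \<le> F s p)"

definition strict_loss :: "(real \<times> real \<Rightarrow> real \<times> real \<Rightarrow> real) \<Rightarrow>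
    real \<Rightarrow> real \<Rightarrow> bool" where
  "strict_loss F B BS0 \<longleftrightarrow>
     (\<exists>s' \<in> feasible B 0. \<exists>q \<in> pos_prices.
        \<forall>s \<in> feasible B BS0. \<forall>p \<in> pos_prices. F s p < F s' q)"

definition market_clearing :: "real \<Rightarrow> real \<Rightarrow> real \<Rightarrow> real \<Rightarrow> real \<Rightarrow>
    real \<times> real \<Rightarrow> real \<times> real \<Rightarrow> bool" where
  "market_clearing al R0 lS Nm Nf s p \<longleftrightarrow>
     Nm * demand al (fst p) = fst s * R0 \<and> Nf * demand al (snd p) = lS * snd s * R0"

end

theory Submission
  imports Defs
begin

lemma amgm:
  fixes a b al :: real
  assumes "0 < a" "0 < b" "0 < al" "al < 1"
  shows "a powr al * b powr (1 - al) \<le> al * a + (1 - al) * b"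
    and "a \<noteq> b \<Longrightarrow> a powr al * b powr (1 - al) < al * a + (1 - al) * b"
proof -
  define m where "m = al * a + (1 - al) * b"
  have m0: "0 < m" unfolding m_def using assms by (simp add: add_pos_pos)
  have la: "ln (a / m) \<le> a / m - 1" using ln_le_minus_one assms m0 by simp
  have lb: "ln (b / m) \<le> b / m - 1" using ln_le_minus_one assms m0 by simp
  have e: "al * (a / m - 1) + (1 - al) * (b / m - 1) = 0"
    using m0 unfolding m_def by (simp add: field_simps)
  have lhs: "a powr al * b powr (1 - al) = exp (al * ln a + (1 - al) * ln b)"
    using assms by (simp add: powr_def exp_add)
  have sum: "al * ln (a / m) + (1 - al) * ln (b / m) = al * ln a + (1 - al) * ln b - ln m"
    using assms m0 by (simp add: ln_div algebra_simps)
  have le: "al * ln a + (1 - al) * ln b \<le> ln m"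
  proof -
    have "al * ln (a / m) \<le> al * (a / m - 1)" using la assms by simp
    moreover have "(1 - al) * ln (b / m) \<le> (1 - al) * (b / m - 1)" using lb assms by simp
    ultimately show ?thesis using sum e by linarith
  qed
  show "a powr al * b powr (1 - al) \<le> al * a + (1 - al) * b"
    using lhs le m0 by (metis exp_le_cancel_iff exp_ln m_def)
  assume ne: "a \<noteq> b"
  have am: "a \<noteq> m"
  proof
    assume "a = m"
    hence "(1 - al) * (b - a) = 0" unfolding m_def by (simp add: algebra_simps)
    thus False using ne assms by simp
  qed
  have la': "ln (a / m) < a / m - 1"
  proof -
    have "a / m \<noteq> 1" using am m0 by simp
    hence "ln (a / m) \<noteq> a / m - 1" using ln_eq_minus_one[of "a/m"] assms m0 by auto
    thus ?thesis using la by simp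
  qed
  have lt: "al * ln a + (1 - al) * ln b < ln m"
  proof -
    have "al * ln (a / m) < al * (a / m - 1)" using la' assms by simp
    moreover have "(1 - al) * ln (b / m) \<le> (1 - al) * (b / m - 1)" using lb assms by simp
    ultimately show ?thesis using sum e by linarith
  qed
  show "a powr al * b powr (1 - al) < al * a + (1 - al) * b"
    using lhs lt m0 by (metis exp_less_cancel_iff exp_ln m_def)
qed

lemma demand_pos: "0 < p \<Longrightarrow> 0 < demand al p"
  by (simp add: demand_def)

lemma inv_demand:
  assumes "0 < p" "0 < al"
  shows "demand al p powr (- al) = p"
  using assms by (simp add: demand_def powr_powr powr_minus_divide powr_divide)

lemma tangent:
  fixes al p q :: real
  assumes "0 < p" "0 < q" "0 < al" "al < 1"
  shows "p * demand al p \<le> q * (al * demand al q + (1 - al) * demand al p)"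
    and "demand al p \<noteq> demand al q \<Longrightarrow>
         p * demand al p < q * (al * demand al q + (1 - al) * demand al p)"
proof -
  define a where "a = demand al q"
  define b where "b = demand al p"
  have a0: "0 < a" and b0: "0 < b" using assms demand_pos a_def b_def by auto
  have qa: "q = a powr (- al)" using inv_demand assms a_def by simp
  have pb: "p = b powr (- al)" using inv_demand assms b_def by simp
  have l: "p * b = q * (a powr al * b powr (1 - al))"
  proof -
    have "b powr (- al + 1) = b powr (- al) * b powr 1" by (rule powr_add)
    hence "b powr (1 - al) = b powr (- al) * b" using b0 by (simp add: add.commute)
    hence "p * b = b powr (1 - al)" using pb b0 by simp
    moreover have "q * a powr al = 1" using qa a0 by (simp add: powr_minus_divide)
    ultimately show ?thesis by (metis mult.assoc mult_1)
  qed
  show "p * demand al p \<le> q * (al * demand al q + (1 - al) * demand al p)"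
    using l amgm(1)[OF a0 b0 assms(3,4)] assms(2) a_def b_def by (simp add: mult_left_mono)
  assume "demand al p \<noteq> demand al q"
  hence "a \<noteq> b" using a_def b_def by simp
  thus "p * demand al p < q * (al * demand al q + (1 - al) * demand al p)"
    using l amgm(2)[OF a0 b0 assms(3,4)] assms(2) a_def b_def by simp
qed

lemma assoc_arith:
  fixes cM cS Nm Nf xS :: real
  assumes "0 \<le> cM" "0 \<le> cS" "0 < Nm" "0 < Nf" "0 \<le> xS" "xS \<le> Nf"
  defines "mM \<equiv> min Nm cM"
  defines "R \<equiv> cM - mM"
  assumes "(fM, fS) = (if c1 then (let fS = min Nf cS in (min (Nf - fS) R, fS))
            else if c2 then (let fM = min Nf R in (fM, min (Nf - fM) cS))
            else (let xM = Nf - xS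
               in (min R (xM + max 0 (xS - cS)), min cS (xS + max 0 (xM - R)))))"
  shows "0 \<le> fM \<and> fM \<le> R \<and> 0 \<le> fS \<and> fS \<le> cS \<and> fS \<le> Nf \<and> fM + fS \<le> Nf
         \<and> 0 \<le> mM \<and> mM \<le> Nm \<and> mM + R = cM"
  using assms unfolding Let_def by (auto split: if_splits simp: min_def max_def)

lemma assoc_bounds:
  fixes al R0 lS Nm Nf BM BS pM pS KM KS :: real
  assumes "0 \<le> BM" "0 \<le> BS" "0 < pM" "0 < pS" "0 < R0" "0 < lS" "0 < Nm" "0 < Nf"
    and K: "assoc al R0 lS Nm Nf (BM, BS) (pM, pS) = (KM, KS)"
  shows "0 \<le> KM \<and> 0 \<le> KS \<and> KS \<le> Nf \<and> KM + KS \<le> Nm + Nf \<and>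
         KM * demand al pM \<le> BM * R0 \<and> KS * demand al pS \<le> lS * BS * R0"
proof -
  define CM where "CM = BM * R0"
  define CS where "CS = lS * BS * R0"
  define cM where "cM = CM / demand al pM"
  define cS where "cS = CS / demand al pS"
  define mM where "mM = min Nm cM"
  define R where "R = cM - mM"
  define xS where "xS = (if CS + CM = 0 then 0 else Nf * CS / (CS + CM))"
  have dM: "0 < demand al pM" and dS: "0 < demand al pS" using assms demand_pos by auto
  have CM0: "0 \<le> CM" "0 \<le> CS" using assms by (auto simp: CM_def CS_def)
  have c0: "0 \<le> cM" "0 \<le> cS" using CM0 dM dS by (auto simp: cM_def cS_def)
  have x0: "0 \<le> xS" "xS \<le> Nf"
  proof -
    show "0 \<le> xS" using CM0 assms by (simp add: xS_def)
    show "xS \<le> Nf"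
    proof (cases "CS + CM = 0")
      case True thus ?thesis using assms by (simp add: xS_def)
    next
      case False
      hence p: "0 < CS + CM" using CM0 by linarith
      have "Nf * CS \<le> Nf * (CS + CM)" using CM0 assms by simp
      thus ?thesis using p False by (simp add: xS_def divide_le_eq)
    qed
  qed
  define IF where "IF = (if pS < pM then (let fS = min Nf cS in (min (Nf - fS) R, fS))
            else if pM < pS then (let fM = min Nf R in (fM, min (Nf - fM) cS))
            else (let xM = Nf - xS
               in (min R (xM + max 0 (xS - cS)), min cS (xS + max 0 (xM - R)))))"
  obtain fM fS where f: "IF = (fM, fS)" by (metis prod.exhaust)
  have A: "0 \<le> fM \<and> fM \<le> R \<and> 0 \<le> fS \<and> fS \<le> cS \<and> fS \<le> Nf \<and> fM + fS \<le> Nf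
         \<and> 0 \<le> mM \<and> mM \<le> Nm \<and> mM + R = cM"
    using assoc_arith[OF c0 assms(7,8) x0 f[symmetric, unfolded IF_def R_def mM_def]]
    unfolding mM_def R_def by blast
  have E0: "assoc al R0 lS Nm Nf (BM, BS) (pM, pS) = (case IF of (fM, fS) \<Rightarrow> (mM + fM, fS))"
    unfolding assoc_def IF_def CM_def CS_def cM_def cS_def mM_def R_def xS_def Let_def fst_conv snd_conv
    by (rule refl)
  have E: "assoc al R0 lS Nm Nf (BM, BS) (pM, pS) = (mM + fM, fS)"
    using E0 f by simp
  have KM: "KM = mM + fM" and KS: "KS = fS" using E K by auto
  have "KM \<le> cM" using A KM by linarith
  hence "KM * demand al pM \<le> CM" using dM by (simp add: cM_def le_divide_eq)
  moreover have "KS * demand al pS \<le> CS" using A KS dS by (simp add: cS_def le_divide_eq)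
  ultimately show ?thesis using A KM KS by (simp add: CM_def CS_def)
qed

lemma assoc_decomp:
  "assoc al R0 lS Nm Nf (BM, BS) (pM, pS) =
    (case (if pS < pM then (let fS = min Nf (lS * BS * R0 / demand al pS) in
               (min (Nf - fS) (BM * R0 / demand al pM - min Nm (BM * R0 / demand al pM)), fS))
          else if pM < pS then (let fM = min Nf (BM * R0 / demand al pM - min Nm (BM * R0 / demand al pM))
               in (fM, min (Nf - fM) (lS * BS * R0 / demand al pS)))
          else (let xS = (if lS * BS * R0 + BM * R0 = 0 then 0 else Nf * (lS * BS * R0) / (lS * BS * R0 + BM * R0));
                    xM = Nf - xS
               in (min (BM * R0 / demand al pM - min Nm (BM * R0 / demand al pM)) (xM + max 0 (xS - lS * BS * R0 / demand al pS)),
                   min (lS * BS * R0 / demand al pS) (xS + max 0 (xM - (BM * R0 / demand al pM - min Nm (BM * R0 / demand al pM)))))))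
     of (fM, fS) \<Rightarrow> (min Nm (BM * R0 / demand al pM) + fM, fS))"
  unfolding assoc_def Let_def fst_conv snd_conv by (rule refl)

lemma assoc_clear:
  fixes al R0 lS Nm Nf BM BS qM qS :: real
  assumes "0 < qM" "0 < qS" "qS < qM" "0 < Nm" "0 < Nf"
    and "Nm * demand al qM = BM * R0" "Nf * demand al qS = lS * BS * R0"
  shows "assoc al R0 lS Nm Nf (BM, BS) (qM, qS) = (Nm, Nf)"
proof -
  have dM: "0 < demand al qM" and dS: "0 < demand al qS" using assms demand_pos by auto
  have c1: "BM * R0 / demand al qM = Nm" using assms(6) dM by (simp add: field_simps)
  have c2: "lS * BS * R0 / demand al qS = Nf" using assms(7) dS by (simp add: field_simps)
  have mm: "min Nm Nm = Nm" "min Nf Nf = Nf" "min (Nf - Nf) (Nm - Nm) = 0" by auto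
  show ?thesis unfolding assoc_decomp c1 c2 if_P[OF assms(3)] Let_def mm
    by simp
qed

lemma pd:
  assumes "0 < p" "0 < al"
  shows "demand al p powr (1 - al) = p * demand al p"
proof -
  define b where "b = demand al p"
  have b0: "0 < b" using assms demand_pos b_def by auto
  have pb: "p = b powr (- al)" using inv_demand assms b_def by simp
  have "b powr (- al + 1) = b powr (- al) * b powr 1" by (rule powr_add)
  hence H: "b powr (1 - al) = b powr (- al) * b" using b0 by (simp add: add.commute)
  have "b powr (1 - al) = p * b" using H pb by simp
  thus ?thesis by (simp add: b_def)
qed

lemma welfare_rev:
  assumes "p \<in> pos_prices" "0 < al" "al < 1"
  shows "welfare al R0 lS Nm Nf s p = revenue al R0 lS Nm Nf s p / (1 - al)"
proof -
  obtain x y where p: "p = (x, y)" by (metis prod.exhaust)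
  have x: "0 < x" and y: "0 < y" using assms p by (auto simp: pos_prices_def)
  obtain KM KS where K: "assoc al R0 lS Nm Nf s (x, y) = (KM, KS)" by (metis prod.exhaust)
  have "welfare al R0 lS Nm Nf s p = KM * (x * demand al x / (1 - al)) + KS * (y * demand al y / (1 - al))"
    unfolding welfare_def util_def Let_def p K using pd[OF x assms(2)] pd[OF y assms(2)] by simp
  also have "\<dots> = (x * KM * demand al x + y * KS * demand al y) / (1 - al)"
    by (simp add: add_divide_distrib mult_ac)
  also have "\<dots> = revenue al R0 lS Nm Nf s p / (1 - al)"
    unfolding revenue_def Let_def p K by simp
  finally show ?thesis .
qed

lemma demand_anti:
  assumes "0 < al" "0 < q" "q < p"
  shows "demand al p < demand al q"
  unfolding demand_def using assms
  by (intro powr_less_mono2) (auto simp: divide_strict_left_mono)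

lemma core:
  fixes al R0 lS Nm Nf B BS0 BMs BSs qM qS BM BS pM pS :: real
  assumes ha: "0 < al" "al < 1" "0 < R0" "1 < lS" "0 < Nm" "0 < Nf"
    and hs: "0 < BMs" "0 < BSs" "BMs + BSs = B"
    and hq: "0 < qM" "0 < qS" "Nm * demand al qM = BMs * R0" "Nf * demand al qS = lS * BSs * R0"
    and hc: "lS * qS \<le> qM" "lS * qS = qM \<or> BSs = BS0"
    and hf: "0 \<le> BM" "BM + BS \<le> B" "BS0 \<le> BS" "0 \<le> BS"
    and hp: "0 < pM" "0 < pS"
  shows "revenue al R0 lS Nm Nf (BM, BS) (pM, pS) \<le> revenue al R0 lS Nm Nf (BMs, BSs) (qM, qS)"
    and "revenue al R0 lS Nm Nf (BMs, BSs) (qM, qS) \<le> revenue al R0 lS Nm Nf (BM, BS) (pM, pS)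
         \<Longrightarrow> BM = BMs \<and> BS = BSs \<and> Nm * demand al pM = BM * R0 \<and> Nf * demand al pS = lS * BS * R0"
proof -
  define dM where "dM = demand al pM"
  define dS where "dS = demand al pS"
  define aM where "aM = demand al qM"
  define aS where "aS = demand al qS"
  define wM where "wM = qM * aM"
  define wS where "wS = qS * aS"
  have "qS < lS * qS" using ha(4) hq(2) by simp
  hence qSM: "qS < qM" using hc(1) by linarith
  have aMS: "aM < aS" using demand_anti[OF ha(1) hq(2) qSM] aM_def aS_def by simp
  have aM0: "0 < aM" and aS0: "0 < aS" and dM0: "0 < dM" and dS0: "0 < dS"
    using demand_pos hq hp aM_def aS_def dM_def dS_def by auto
  have wM0: "0 < wM" using wM_def hq aM0 by simp
  have wMS: "wM < wS"
  proof -
    have "wM = aM powr (1 - al)" using pd[OF hq(1) ha(1)] wM_def aM_def by simp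
    moreover have "wS = aS powr (1 - al)" using pd[OF hq(2) ha(1)] wS_def aS_def by simp
    moreover have "aM powr (1 - al) < aS powr (1 - al)"
      using aMS aM0 ha by (intro powr_less_mono2) auto
    ultimately show ?thesis by simp
  qed
  define V where "V = Nm * wM + Nf * wS"
  have Vst: "revenue al R0 lS Nm Nf (BMs, BSs) (qM, qS) = V"
    using assoc_clear[OF hq(1,2) qSM ha(5,6) hq(3,4)]
    unfolding revenue_def Let_def V_def wM_def wS_def aM_def aS_def by simp
  obtain KM KS where K: "assoc al R0 lS Nm Nf (BM, BS) (pM, pS) = (KM, KS)" by (metis prod.exhaust)
  have KB: "0 \<le> KM \<and> 0 \<le> KS \<and> KS \<le> Nf \<and> KM + KS \<le> Nm + Nf \<and>
         KM * dM \<le> BM * R0 \<and> KS * dS \<le> lS * BS * R0"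
    using assoc_bounds[OF hf(1,4) hp ha(3) _ ha(5,6) K] ha(4) dM_def dS_def by simp
  have Rv: "revenue al R0 lS Nm Nf (BM, BS) (pM, pS) = KM * (pM * dM) + KS * (pS * dS)"
    unfolding revenue_def Let_def K dM_def dS_def by (simp add: algebra_simps)
  have t1: "pM * dM \<le> qM * (al * aM + (1 - al) * dM)"
    using tangent(1)[OF hp(1) hq(1) ha(1,2)] dM_def aM_def by simp
  have t2: "pS * dS \<le> qS * (al * aS + (1 - al) * dS)"
    using tangent(1)[OF hp(2) hq(2) ha(1,2)] dS_def aS_def by simp
  define X where "X = KM * wM + KS * wS"
  define Y where "Y = qM * (KM * dM) + qS * (KS * dS)"
  define Z where "Z = qM * (BM * R0) + qS * (lS * BS * R0)"
  have P1: "KM * (pM * dM) + KS * (pS * dS) \<le> KM * (qM * (al * aM + (1 - al) * dM)) + KS * (qS * (al * aS + (1 - al) * dS))"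
    using t1 t2 KB by (meson add_mono mult_left_mono)
  have P2: "KM * (qM * (al * aM + (1 - al) * dM)) + KS * (qS * (al * aS + (1 - al) * dS)) = al * X + (1 - al) * Y"
    unfolding X_def Y_def wM_def wS_def by (simp add: algebra_simps)
  have XV: "V - X = (Nm + Nf - KM - KS) * wM + (Nf - KS) * (wS - wM)"
    unfolding V_def X_def by (simp add: algebra_simps)
  have XV1: "0 \<le> (Nm + Nf - KM - KS) * wM" using KB wM0 by simp
  have XV2: "0 \<le> (Nf - KS) * (wS - wM)" using KB wMS by simp
  have YZ: "Z - Y = qM * (BM * R0 - KM * dM) + qS * (lS * BS * R0 - KS * dS)"
    unfolding Z_def Y_def by (simp add: algebra_simps)
  have YZ1: "0 \<le> qM * (BM * R0 - KM * dM)" using KB hq by simp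
  have YZ2: "0 \<le> qS * (lS * BS * R0 - KS * dS)" using KB hq by simp
  have ZV: "Z \<le> V"
  proof -
    have "(qM - lS * qS) * (BS - BSs) \<ge> 0" using hc hf by auto
    hence i1: "(qM - lS * qS) * BSs \<le> (qM - lS * qS) * BS" by (simp add: algebra_simps)
    have i2: "qM * (BM + BS) \<le> qM * (BMs + BSs)" using hf hs hq by simp
    have "qM * BM + qS * lS * BS = qM * (BM + BS) - (qM - lS * qS) * BS" by (simp add: algebra_simps)
    moreover have "qM * BMs + qS * lS * BSs = qM * (BMs + BSs) - (qM - lS * qS) * BSs" by (simp add: algebra_simps)
    ultimately have "qM * BM + qS * lS * BS \<le> qM * BMs + qS * lS * BSs" using i1 i2 by linarith
    hence "R0 * (qM * BM + qS * lS * BS) \<le> R0 * (qM * BMs + qS * lS * BSs)"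
      using ha(3) by simp
    moreover have "V = qM * (BMs * R0) + qS * (lS * BSs * R0)"
    proof -
      have "V = qM * (Nm * aM) + qS * (Nf * aS)" unfolding V_def wM_def wS_def by (simp add: algebra_simps)
      also have "\<dots> = qM * (BMs * R0) + qS * (lS * BSs * R0)" using hq(3,4) aM_def aS_def by simp
      finally show ?thesis .
    qed
    ultimately show ?thesis unfolding Z_def by (simp add: algebra_simps)
  qed
  have XleV: "X \<le> V" using XV XV1 XV2 by linarith
  have YleV: "Y \<le> V" using YZ YZ1 YZ2 ZV by linarith
  have comb: "al * X + (1 - al) * Y \<le> V"
  proof -
    have "al * X \<le> al * V" using XleV ha by simp
    moreover have "(1 - al) * Y \<le> (1 - al) * V" using YleV ha by simp
    ultimately show ?thesis by (simp add: algebra_simps)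
  qed
  show "revenue al R0 lS Nm Nf (BM, BS) (pM, pS) \<le> revenue al R0 lS Nm Nf (BMs, BSs) (qM, qS)"
    using Rv P1 P2 comb Vst by linarith
  assume ge: "revenue al R0 lS Nm Nf (BMs, BSs) (qM, qS) \<le> revenue al R0 lS Nm Nf (BM, BS) (pM, pS)"
  have G: "V \<le> al * X + (1 - al) * Y" using ge Rv P1 P2 Vst by linarith
  have XeV: "X = V"
  proof (rule ccontr)
    assume "X \<noteq> V" hence "X < V" using XleV by simp
    hence "al * X < al * V" using ha by simp
    moreover have "(1 - al) * Y \<le> (1 - al) * V" using YleV ha by simp
    ultimately show False using G by (simp add: algebra_simps)
  qed
  have YeV: "Y = V"
  proof (rule ccontr)
    assume "Y \<noteq> V" hence "Y < V" using YleV by simp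
    hence "(1 - al) * Y < (1 - al) * V" using ha by simp
    moreover have "al * X \<le> al * V" using XleV ha by simp
    ultimately show False using G by (simp add: algebra_simps)
  qed
  have "(Nf - KS) * (wS - wM) = 0" using XV XV1 XV2 XeV by linarith
  hence KSe: "KS = Nf" using wMS by simp
  have "(Nm + Nf - KM - KS) * wM = 0" using XV XV1 XV2 XeV by linarith
  hence KMe: "KM = Nm" using wM0 KSe by simp
  have dMe: "dM = aM"
  proof (rule ccontr)
    assume "dM \<noteq> aM"
    hence "pM * dM < qM * (al * aM + (1 - al) * dM)"
      using tangent(2)[OF hp(1) hq(1) ha(1,2)] dM_def aM_def by simp
    hence "KM * (pM * dM) < KM * (qM * (al * aM + (1 - al) * dM))" using KMe ha by simp
    moreover have "KS * (pS * dS) \<le> KS * (qS * (al * aS + (1 - al) * dS))"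
      using t2 KB by (simp add: mult_left_mono)
    ultimately show False using Rv P2 comb Vst ge by linarith
  qed
  have dSe: "dS = aS"
  proof (rule ccontr)
    assume "dS \<noteq> aS"
    hence "pS * dS < qS * (al * aS + (1 - al) * dS)"
      using tangent(2)[OF hp(2) hq(2) ha(1,2)] dS_def aS_def by simp
    hence "KS * (pS * dS) < KS * (qS * (al * aS + (1 - al) * dS))" using KSe ha by simp
    moreover have "KM * (pM * dM) \<le> KM * (qM * (al * aM + (1 - al) * dM))"
      using t1 KB by (simp add: mult_left_mono)
    ultimately show False using Rv P2 comb Vst ge by linarith
  qed
  have "qM * (BM * R0 - KM * dM) = 0" using YZ YZ1 YZ2 ZV YeV by linarith
  hence e1: "BM * R0 = KM * dM" using hq by simp
  have "qS * (lS * BS * R0 - KS * dS) = 0" using YZ YZ1 YZ2 ZV YeV by linarith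
  hence e2: "lS * BS * R0 = KS * dS" using hq by simp
  have m1: "Nm * dM = BM * R0" using e1 KMe by simp
  have m2: "Nf * dS = lS * BS * R0" using e2 KSe by simp
  have "Nm * dM = BMs * R0" using dMe hq(3) aM_def by simp
  hence "BM * R0 = BMs * R0" using m1 by linarith
  hence b1: "BM = BMs" using ha by simp
  have "Nf * dS = lS * BSs * R0" using dSe hq(4) aS_def by simp
  hence "lS * BS * R0 = lS * BSs * R0" using m2 by linarith
  hence b2: "BS = BSs" using ha by simp
  show "BM = BMs \<and> BS = BSs \<and> Nm * demand al pM = BM * R0 \<and> Nf * demand al pS = lS * BS * R0"
    using b1 b2 m1 m2 dM_def dS_def by simp
qed

definition good :: "(real \<times> real \<Rightarrow> real \<times> real \<Rightarrow> real) \<Rightarrow> (real \<times> real \<Rightarrow> real \<times> real \<Rightarrow> bool)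
    \<Rightarrow> real \<Rightarrow> real \<Rightarrow> real \<times> real \<Rightarrow> real \<times> real \<Rightarrow> bool" where
  "good F MC B BS0 ss q \<longleftrightarrow> ss \<in> feasible B BS0 \<and> q \<in> pos_prices \<and>
     (\<forall>s\<in>feasible B BS0. \<forall>p\<in>pos_prices. F s p \<le> F ss q \<and> (F ss q \<le> F s p \<longrightarrow> s = ss \<and> MC s p))"

lemma good_alloc:
  assumes "good F MC B BS0 ss q"
  shows "{s. opt_alloc F B BS0 s} = {ss}"
    and "\<forall>s. opt_alloc F B BS0 s \<longrightarrow> (\<exists>p. opt_prices F s p) \<and> (\<forall>p. opt_prices F s p \<longrightarrow> MC s p)"
proof -
  have G: "ss \<in> feasible B BS0" "q \<in> pos_prices"
    "\<And>s p. s \<in> feasible B BS0 \<Longrightarrow> p \<in> pos_prices \<Longrightarrow> F s p \<le> F ss q"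
    "\<And>s p. s \<in> feasible B BS0 \<Longrightarrow> p \<in> pos_prices \<Longrightarrow> F ss q \<le> F s p \<Longrightarrow> s = ss \<and> MC s p"
    using assms unfolding good_def by auto
  have o1: "opt_alloc F B BS0 ss" unfolding opt_alloc_def using G by blast
  have o2: "s = ss" if "opt_alloc F B BS0 s" for s
  proof -
    from that obtain p0 where "s \<in> feasible B BS0" "p0 \<in> pos_prices"
      "\<forall>s'\<in>feasible B BS0. \<forall>q'\<in>pos_prices. F s' q' \<le> F s p0"
      unfolding opt_alloc_def by blast
    thus ?thesis using G by blast
  qed
  show "{s. opt_alloc F B BS0 s} = {ss}" using o1 o2 by blast
  show "\<forall>s. opt_alloc F B BS0 s \<longrightarrow> (\<exists>p. opt_prices F s p) \<and> (\<forall>p. opt_prices F s p \<longrightarrow> MC s p)"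
  proof (intro allI impI)
    fix s assume "opt_alloc F B BS0 s"
    hence s: "s = ss" using o2 by blast
    have e: "\<exists>p. opt_prices F s p" unfolding opt_prices_def s using G by blast
    have a: "\<forall>p. opt_prices F s p \<longrightarrow> MC s p"
    proof (intro allI impI)
      fix p assume "opt_prices F s p"
      hence "p \<in> pos_prices" "F ss q \<le> F ss p" unfolding opt_prices_def s using G by auto
      thus "MC s p" using G(1,4) s by blast
    qed
    show "(\<exists>p. opt_prices F s p) \<and> (\<forall>p. opt_prices F s p \<longrightarrow> MC s p)" using e a by blast
  qed
qed

lemma good_loss:
  assumes "good F MC B 0 ss q" "ss \<notin> feasible B BS0" "0 \<le> BS0"
  shows "strict_loss F B BS0"
proof -
  have sub: "feasible B BS0 \<subseteq> feasible B 0" using assms(3) by (auto simp: feasible_def)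
  have "\<forall>s\<in>feasible B BS0. \<forall>p\<in>pos_prices. F s p < F ss q"
  proof (intro ballI)
    fix s p assume s: "s \<in> feasible B BS0" and p: "p \<in> pos_prices"
    hence "s \<in> feasible B 0" using sub by blast
    hence "F s p \<le> F ss q \<and> (F ss q \<le> F s p \<longrightarrow> s = ss \<and> MC s p)"
      using assms(1) p unfolding good_def by blast
    thus "F s p < F ss q" using s assms(2) by force
  qed
  thus ?thesis unfolding strict_loss_def using assms(1) unfolding good_def by blast
qed

lemma good_scale:
  assumes "good F MC B BS0 ss q" "0 < c"
    and "\<And>s p. p \<in> pos_prices \<Longrightarrow> G s p = F s p / c"
  shows "good G MC B BS0 ss q"
proof -
  have "ss \<in> feasible B BS0" "q \<in> pos_prices" and
    H: "\<forall>s\<in>feasible B BS0. \<forall>p\<in>pos_prices. F s p \<le> F ss q \<and> (F ss q \<le> F s p \<longrightarrow> s = ss \<and> MC s p)"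
    using assms(1) unfolding good_def by auto
  moreover have "\<forall>s\<in>feasible B BS0. \<forall>p\<in>pos_prices. G s p \<le> G ss q \<and> (G ss q \<le> G s p \<longrightarrow> s = ss \<and> MC s p)"
  proof (intro ballI)
    fix s p assume s: "s \<in> feasible B BS0" and p: "p \<in> pos_prices"
    have g1: "G s p = F s p / c" using assms(3) p by simp
    have g2: "G ss q = F ss q / c" using assms(3) \<open>q \<in> pos_prices\<close> by simp
    have f: "F s p \<le> F ss q \<and> (F ss q \<le> F s p \<longrightarrow> s = ss \<and> MC s p)" using H s p by blast
    show "G s p \<le> G ss q \<and> (G ss q \<le> G s p \<longrightarrow> s = ss \<and> MC s p)"
      using f assms(2) unfolding g1 g2 by (auto simp: divide_right_mono divide_le_cancel)
  qed
  ultimately show ?thesis unfolding good_def by blast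
qed

lemma dq:
  assumes "0 < al" "0 < a" "0 < b"
  shows "b * demand al ((b / a) powr al) = a"
proof -
  have "1 / ((b / a) powr al) = (a / b) powr al"
    using assms by (simp add: powr_divide)
  hence "demand al ((b / a) powr al) = (a / b) powr (al * (1 / al))"
    unfolding demand_def by (simp add: powr_powr)
  also have "\<dots> = a / b" using assms by simp
  finally show ?thesis using assms by simp
qed

lemma cmp:
  fixes al lS Nf y :: real
  assumes "0 < al" "0 < lS" "0 < y" "0 < Nf"
  shows "lS * (Nf / (lS * y)) powr al = (Nf * lS powr (1 / al - 1) / y) powr al"
proof -
  have l: "lS = (lS powr (1 / al)) powr al" using assms by (simp add: powr_powr)
  have "lS * (Nf / (lS * y)) powr al = (lS powr (1 / al) * (Nf / (lS * y))) powr al"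
    unfolding powr_mult using l by simp
  also have "lS powr (1 / al) * (Nf / (lS * y)) = Nf * (lS powr (1 / al) / lS powr 1) / y"
    using assms by simp
  also have "lS powr (1 / al) / lS powr 1 = lS powr (1 / al - 1)" by (simp add: powr_diff)
  finally show ?thesis .
qed

lemma inst:
  fixes al R0 lS Nm Nf B BS0 BMs BSs :: real
  assumes ha: "0 < al" "al < 1" "0 < R0" "1 < lS" "0 < Nm" "0 < Nf"
    and hs: "0 < BMs" "0 < BSs" "BMs + BSs = B" "BS0 \<le> BSs" "0 \<le> BS0"
    and ht: "Nf * lS powr (1 / al - 1) * BMs \<le> Nm * BSs"
      "Nf * lS powr (1 / al - 1) * BMs = Nm * BSs \<or> BSs = BS0"
  shows "good (revenue al R0 lS Nm Nf) (market_clearing al R0 lS Nm Nf) B BS0 (BMs, BSs)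
           ((Nm / (BMs * R0)) powr al, (Nf / (lS * BSs * R0)) powr al)"
proof -
  define th where "th = Nf * lS powr (1 / al - 1)"
  define qM where "qM = (Nm / (BMs * R0)) powr al"
  define qS where "qS = (Nf / (lS * BSs * R0)) powr al"
  have qM0: "0 < qM" unfolding qM_def using ha hs by simp
  have qS0: "0 < qS" unfolding qS_def using ha hs by simp
  have hq3: "Nm * demand al qM = BMs * R0"
    unfolding qM_def using dq[of al "BMs * R0" Nm] ha hs by simp
  have hq4: "Nf * demand al qS = lS * BS * R0" if "BS = BSs" for BS
    unfolding qS_def that using dq[of al "lS * BSs * R0" Nf] ha hs by simp
  have lq: "lS * qS = (th / (BSs * R0)) powr al"
    unfolding qS_def th_def using cmp[of al lS "BSs * R0" Nf] ha hs by (simp add: mult.assoc)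
  have le1: "th * (BMs * R0) \<le> Nm * (BSs * R0)"
    using ht(1) ha(3) unfolding th_def by (simp add: mult.assoc[symmetric] mult_right_mono)
  have le: "th / (BSs * R0) \<le> Nm / (BMs * R0)"
    using le1 ha hs by (simp add: divide_le_eq le_divide_eq mult_ac)
  have th0: "0 \<le> th" unfolding th_def using ha by simp
  have hc1: "lS * qS \<le> qM" unfolding lq qM_def
    using le ha hs th0 by (intro powr_mono2) auto
  have hc2: "lS * qS = qM \<or> BSs = BS0"
  proof (cases "BSs = BS0")
    case False
    hence "th * BMs = Nm * BSs" using ht(2) th_def by simp
    hence "th / (BSs * R0) = Nm / (BMs * R0)" using ha hs by (simp add: field_simps)
    thus ?thesis unfolding lq qM_def by simp
  qed simp
  have core_use: "\<And>BM BS pM pS. 0 \<le> BM \<Longrightarrow> BM + BS \<le> B \<Longrightarrow> BS0 \<le> BS \<Longrightarrow> 0 < pM \<Longrightarrow> 0 < pS \<Longrightarrow>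
     revenue al R0 lS Nm Nf (BM, BS) (pM, pS) \<le> revenue al R0 lS Nm Nf (BMs, BSs) (qM, qS) \<and>
     (revenue al R0 lS Nm Nf (BMs, BSs) (qM, qS) \<le> revenue al R0 lS Nm Nf (BM, BS) (pM, pS)
         \<longrightarrow> BM = BMs \<and> BS = BSs \<and> Nm * demand al pM = BM * R0 \<and> Nf * demand al pS = lS * BS * R0)"
  proof -
    fix BM BS pM pS :: real
    assume h: "0 \<le> BM" "BM + BS \<le> B" "BS0 \<le> BS" "0 < pM" "0 < pS"
    have BS0': "0 \<le> BS" using h hs by linarith
    show "?thesis BM BS pM pS"
      using core[OF ha hs(1,2,3) qM0 qS0 hq3 hq4[OF refl] hc1 hc2 h(1,2,3) BS0' h(4,5)] by blast
  qed
  show ?thesis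
    unfolding good_def qM_def[symmetric] qS_def[symmetric]
  proof (intro conjI ballI)
    show "(BMs, BSs) \<in> feasible B BS0" using hs by (simp add: feasible_def)
    show "(qM, qS) \<in> pos_prices" using qM0 qS0 by (simp add: pos_prices_def)
    fix s p assume s: "s \<in> feasible B BS0" and p: "p \<in> pos_prices"
    obtain BM BS where sp: "s = (BM, BS)" by (metis prod.exhaust)
    obtain pM pS where pp: "p = (pM, pS)" by (metis prod.exhaust)
    have h: "0 \<le> BM" "BM + BS \<le> B" "BS0 \<le> BS" "0 < pM" "0 < pS"
      using s p sp pp by (auto simp: feasible_def pos_prices_def)
    note C = core_use[OF h]
    show "revenue al R0 lS Nm Nf s p \<le> revenue al R0 lS Nm Nf (BMs, BSs) (qM, qS)"
      using C sp pp by simp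
    show "revenue al R0 lS Nm Nf (BMs, BSs) (qM, qS) \<le> revenue al R0 lS Nm Nf s p \<longrightarrow>
          s = (BMs, BSs) \<and> market_clearing al R0 lS Nm Nf s p"
      using C sp pp by (auto simp: market_clearing_def)
  qed
qed

theorem theorem1:
  fixes al R0 lS Nm Nf B BS0 :: real
  assumes "0 < al" "al < 1" "R0 > 0" "lS > 1" "Nm > 0" "Nf > 0" "B > 0"
    and "0 \<le> BS0" "BS0 < B"
  defines "th \<equiv> Nf * lS powr (1 / al - 1)"
  defines "REV \<equiv> revenue al R0 lS Nm Nf" and "SW \<equiv> welfare al R0 lS Nm Nf"
  shows "(BS0 \<le> th * B / (th + Nm) \<longrightarrow>
            {s. opt_alloc SW B BS0 s} = {(Nm * B / (th + Nm), th * B / (th + Nm))} \<and>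
            {s. opt_alloc REV B BS0 s} = {(Nm * B / (th + Nm), th * B / (th + Nm))})
       \<and> (BS0 > th * B / (th + Nm) \<longrightarrow>
            {s. opt_alloc SW B BS0 s} = {(B - BS0, BS0)} \<and>
            {s. opt_alloc REV B BS0 s} = {(B - BS0, BS0)} \<and>
            strict_loss SW B BS0 \<and> strict_loss REV B BS0)
       \<and> (\<forall>s. opt_alloc SW B BS0 s \<longrightarrow>
            (\<exists>p. opt_prices SW s p) \<and>
            (\<forall>p. opt_prices SW s p \<longrightarrow> market_clearing al R0 lS Nm Nf s p))
       \<and> (\<forall>s. opt_alloc REV B BS0 s \<longrightarrow>
            (\<exists>p. opt_prices REV s p) \<and>
            (\<forall>p. opt_prices REV s p \<longrightarrow> market_clearing al R0 lS Nm Nf s p))"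
proof -
  note ha = assms(1,2,3,4,5,6)
  define MC where "MC = market_clearing al R0 lS Nm Nf"
  have th0: "0 < th" unfolding th_def using assms by simp
  define m1 where "m1 = Nm * B / (th + Nm)"
  define b1 where "b1 = th * B / (th + Nm)"
  have m10: "0 < m1" and b10: "0 < b1" unfolding m1_def b1_def using th0 assms(5,7) by auto
  have mb: "m1 + b1 = B"
  proof -
    have ne: "th + Nm \<noteq> 0" using th0 assms(5) by simp
    have "m1 + b1 = (B * (th + Nm)) / (th + Nm)" unfolding m1_def b1_def
      by (simp add: add_divide_distrib[symmetric] algebra_simps)
    also have "\<dots> = B" using ne by simp
    finally show ?thesis .
  qed
  have tmb: "th * m1 = Nm * b1" unfolding m1_def b1_def by simp
  define q1 where "q1 = ((Nm / (m1 * R0)) powr al, (Nf / (lS * b1 * R0)) powr al)"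
  have g1: "good REV MC B BS0' (m1, b1) q1" if "0 \<le> BS0'" "BS0' \<le> b1" for BS0'
    unfolding REV_def MC_def q1_def
    using inst[OF ha m10 b10 mb that(2,1)] tmb unfolding th_def by simp
  have scale: "\<And>s p. p \<in> pos_prices \<Longrightarrow> SW s p = REV s p / (1 - al)"
    unfolding SW_def REV_def using welfare_rev ha by blast
  have al1: "0 < 1 - al" using ha by simp
  have gen: "good REV MC B BS0 ss q \<Longrightarrow>
     {s. opt_alloc SW B BS0 s} = {ss} \<and> {s. opt_alloc REV B BS0 s} = {ss} \<and>
     (\<forall>s. opt_alloc SW B BS0 s \<longrightarrow> (\<exists>p. opt_prices SW s p) \<and> (\<forall>p. opt_prices SW s p \<longrightarrow> MC s p)) \<and>
     (\<forall>s. opt_alloc REV B BS0 s \<longrightarrow> (\<exists>p. opt_prices REV s p) \<and> (\<forall>p. opt_prices REV s p \<longrightarrow> MC s p))"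
    for ss q
  proof -
    assume g: "good REV MC B BS0 ss q"
    have g': "good SW MC B BS0 ss q" using good_scale[OF g al1] scale by blast
    show ?thesis using good_alloc[OF g] good_alloc[OF g'] by blast
  qed
  show ?thesis
  proof (cases "BS0 \<le> b1")
    case True
    have G: "good REV MC B BS0 (m1, b1) q1" using g1 True assms(8) by blast
    show ?thesis using gen[OF G] True unfolding MC_def m1_def b1_def by auto
  next
    case False
    hence lt: "b1 < BS0" by simp
    have BS0p: "0 < BS0" using lt b10 by simp
    have Bp: "0 < B - BS0" using assms(9) by simp
    have "th * B < BS0 * (th + Nm)" using lt th0 assms(5) unfolding b1_def by (simp add: divide_less_eq)
    hence ineq: "th * (B - BS0) \<le> Nm * BS0" by (simp add: algebra_simps)
    have G: "good REV MC B BS0 (B - BS0, BS0)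
        ((Nm / ((B - BS0) * R0)) powr al, (Nf / (lS * BS0 * R0)) powr al)"
      unfolding REV_def MC_def
      using inst[OF ha Bp BS0p _ order_refl assms(8)] ineq unfolding th_def by simp
    have G0: "good REV MC B 0 (m1, b1) q1" using g1 b10 by simp
    have nf: "(m1, b1) \<notin> feasible B BS0" using lt by (simp add: feasible_def)
    have L1: "strict_loss REV B BS0" using good_loss[OF G0 nf assms(8)] .
    have G0': "good SW MC B 0 (m1, b1) q1" using good_scale[OF G0 al1] scale by blast
    have L2: "strict_loss SW B BS0" using good_loss[OF G0' nf assms(8)] .
    show ?thesis using gen[OF G] L1 L2 lt unfolding MC_def b1_def by auto
  qed
qed

end
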